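(* For monomials $T$ of $K\{X\}_\infty$ define $K$-linear maps $\partial_T:K\{X\}_\infty\to K\{X\}_\infty$ by $\Delta_a(f)=\sum_T T\otimes\partial_T(f)$ (sum over all monomials $T$, including $T=1$, so $\partial_1=\mathrm{id}$). Then: (i) $\partial_S\circ\partial_T=\partial_T\circ\partial_S$ for all monomials $S,T$; (ii) for every $x_k\in X$, $\partial_{x_k}$ is the derivation $\partial_k$; (iii) for a monomial $T$ and $f_1,\dots,f_p\in K\{X\}_\infty$, $$\partial_T(\vee^p(f_1,\dots,f_p))=\sum_{\vee^p(T^1,\dots,T^p)=T}\vee^p\bigl(\partial_{T^1}(f_1),\dots,\partial_{T^p}(f_p)\bigr),$$ the sum running over all tuples of (possibly empty) monomials $T^1,\dots,T^p$ with $\vee^p(T^1,\dots,T^p)=T$. In particular, if $T=\vee^2(T^1,T^2)$ with $T^1,T^2\neq1$ and $f_1,f_2\in K\{X\}$, then $\partial_T(f_1\cdot f_2)=f_1\cdot\partial_T(f_2)+\partial_{T^1}(f_1)\cdot\partial_{T^2}(f_2)+\partial_T(f_1)\cdot f_2$.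
   Context: $K$ is a field of characteristic $0$ and $X=\{x_1,x_2,\dots\}$ a finite or countable set of variables. A planar rooted tree is reduced if no vertex has exactly one incoming edge. $K\{X\}_\infty$ has basis the monomials: the empty tree $1$ and all planar reduced rooted trees with leaves labelled by elements of $X$; for $k\ge2$, $\vee^k$ grafts $k$ nonempty trees (in order) onto a new root, extended multilinearly, with unit conventions (arguments equal to $1$ are omitted, $\vee^1=\mathrm{id}$, $\vee^k(1,\dots,1)=1$). $K\{X\}$ is the span of $1$ and the binary trees, with $a\cdot b=\vee^2(a,b)$. $K\{X\}_\infty\otimes K\{X\}_\infty$ carries the operations componentwise, and $\Delta_a$ is the unique unital homomorphism for the $\vee^k$ with $\Delta_a(x_i)=x_i\otimes1+1\otimes x_i$. $\partial_k$ is the derivation with $\partial_k(x_l)=\delta_{kl}$, where a derivation $D$ satisfies $D(\vee^n(v_1,\dots,v_n))=\sum_i\vee^n(v_1,\dots,D(v_i),\dots,v_n)$ and $D|_K=0$. *)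

theory Defs
  imports Main "HOL-Library.Poly_Mapping" "HOL-Library.Countable"
begin

text \<open>Nonempty planar rooted trees: a leaf labelled by a variable, or a root
with an ordered list of subtrees.  A monomial of K{X}_inf is either the empty
tree 1 (represented by None) or Some t with t a reduced tree.\<close>

datatype 'x tr = Lf 'x | Nd "'x tr list"

type_synonym 'x mono = "'x tr option"

fun reduced :: "'x tr \<Rightarrow> bool" where
  "reduced (Lf x) = True"
| "reduced (Nd ts) = (2 \<le> length ts \<and> (\<forall>t\<in>set ts. reduced t))"

fun binary :: "'x tr \<Rightarrow> bool" where
  "binary (Lf x) = True"
| "binary (Nd ts) = (length ts = 2 \<and> (\<forall>t\<in>set ts. binary t))"

definition monomials :: "'x mono set" where
  "monomials = {None} \<union> Some ` {t. reduced t}"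

definition bin_monomials :: "'x mono set" where
  "bin_monomials = {None} \<union> Some ` {t. binary t}"

definition vee_m :: "'x mono list \<Rightarrow> 'x mono" where
  "vee_m Ts = (let us = map the (filter (\<lambda>T. T \<noteq> None) Ts) in
     (case us of [] \<Rightarrow> None | [u] \<Rightarrow> Some u | _ \<Rightarrow> Some (Nd us)))"

text \<open>Elements of K{X}_inf are finitely supported functions from monomials to K,
elements of K{X}_inf \<otimes> K{X}_inf are finitely supported functions on pairs of
monomials.\<close>

definition Kinf :: "('x mono \<Rightarrow>\<^sub>0 'k::field) set" where
  "Kinf = {f. Poly_Mapping.keys f \<subseteq> monomials}"

definition KX :: "('x mono \<Rightarrow>\<^sub>0 'k::field) set" where
  "KX = {f. Poly_Mapping.keys f \<subseteq> bin_monomials}"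

definition mext :: "('m list \<Rightarrow> 'm) \<Rightarrow> ('m \<Rightarrow>\<^sub>0 'k::field) list \<Rightarrow> ('m \<Rightarrow>\<^sub>0 'k)" where
  "mext op fs = (\<Sum>ms\<in>listset (map Poly_Mapping.keys fs).
      Poly_Mapping.single (op ms) (prod_list (map2 Poly_Mapping.lookup fs ms)))"

definition lext :: "('m \<Rightarrow> ('n \<Rightarrow>\<^sub>0 'k::field)) \<Rightarrow> ('m \<Rightarrow>\<^sub>0 'k) \<Rightarrow> ('n \<Rightarrow>\<^sub>0 'k)" where
  "lext g f = (\<Sum>m\<in>Poly_Mapping.keys f. Poly_Mapping.map (\<lambda>c. Poly_Mapping.lookup f m * c) (g m))"

definition basis :: "'m \<Rightarrow> ('m \<Rightarrow>\<^sub>0 'k::field)" where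
  "basis m = Poly_Mapping.single m 1"

definition vee :: "('x mono \<Rightarrow>\<^sub>0 'k::field) list \<Rightarrow> ('x mono \<Rightarrow>\<^sub>0 'k)" where
  "vee fs = mext vee_m fs"

definition mult :: "('x mono \<Rightarrow>\<^sub>0 'k::field) \<Rightarrow> ('x mono \<Rightarrow>\<^sub>0 'k) \<Rightarrow> ('x mono \<Rightarrow>\<^sub>0 'k)" where
  "mult a b = vee [a, b]"

definition vee_pair :: "('x mono \<times> 'x mono) list \<Rightarrow> 'x mono \<times> 'x mono" where
  "vee_pair ps = (vee_m (map fst ps), vee_m (map snd ps))"

definition vee2 :: "(('x mono \<times> 'x mono) \<Rightarrow>\<^sub>0 'k::field) list \<Rightarrow> (('x mono \<times> 'x mono) \<Rightarrow>\<^sub>0 'k)" where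
  "vee2 fs = mext vee_pair fs"

text \<open>The unital homomorphism for all vee^k with x_i \<mapsto> x_i \<otimes> 1 + 1 \<otimes> x_i,
given by its values on the basis.\<close>

fun delta_tr :: "'x tr \<Rightarrow> (('x mono \<times> 'x mono) \<Rightarrow>\<^sub>0 'k::field)" where
  "delta_tr (Lf x) = basis (Some (Lf x), None) + basis (None, Some (Lf x))"
| "delta_tr (Nd ts) = vee2 (map delta_tr ts)"

definition delta_m :: "'x mono \<Rightarrow> (('x mono \<times> 'x mono) \<Rightarrow>\<^sub>0 'k::field)" where
  "delta_m T = (case T of None \<Rightarrow> basis (None, None) | Some t \<Rightarrow> delta_tr t)"

definition Delta_a :: "('x mono \<Rightarrow>\<^sub>0 'k::field) \<Rightarrow> (('x mono \<times> 'x mono) \<Rightarrow>\<^sub>0 'k)" where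
  "Delta_a f = lext delta_m f"

text \<open>partial_T f is defined by Delta_a(f) = \<Sum>_T T \<otimes> partial_T(f).\<close>

definition dT :: "'x mono \<Rightarrow> ('x mono \<Rightarrow>\<^sub>0 'k::field) \<Rightarrow> ('x mono \<Rightarrow>\<^sub>0 'k)" where
  "dT T f = (\<Sum>p\<in>{p\<in>Poly_Mapping.keys (Delta_a f). fst p = T}.
               Poly_Mapping.single (snd p) (Poly_Mapping.lookup (Delta_a f) p))"

function der_tr :: "'x \<Rightarrow> 'x tr \<Rightarrow> ('x mono \<Rightarrow>\<^sub>0 'k::field)" where
  "der_tr k (Lf x) = (if x = k then basis None else 0)"
| "der_tr k (Nd ts) = (\<Sum>i<length ts.
      vee ((map (\<lambda>t. basis (Some t)) ts)[i := der_tr k (ts ! i)]))"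
  by pat_completeness auto
termination
proof (relation "measure (\<lambda>(k, t). size t)")
  show "wf (measure (\<lambda>(k, t). size t))" by simp
next
  fix k :: 'x and ts :: "'x tr list" and i
  assume "i \<in> {..<length ts}"
  then have "ts ! i \<in> set ts" by simp
  then have "size (ts ! i) \<le> size_list size ts" by (rule size_list_estimation') simp
  then show "((k, ts ! i), k, Nd ts) \<in> measure (\<lambda>(k, t). size t)" by simp
qed

definition der_m :: "'x \<Rightarrow> 'x mono \<Rightarrow> ('x mono \<Rightarrow>\<^sub>0 'k::field)" where
  "der_m k T = (case T of None \<Rightarrow> 0 | Some t \<Rightarrow> der_tr k t)"

definition der :: "'x \<Rightarrow> ('x mono \<Rightarrow>\<^sub>0 'k::field) \<Rightarrow> ('x mono \<Rightarrow>\<^sub>0 'k)" where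
  "der k f = lext (der_m k) f"

end

theory Submission
  imports Defs
begin

definition sc :: "'k::field \<Rightarrow> ('m \<Rightarrow>\<^sub>0 'k) \<Rightarrow> ('m \<Rightarrow>\<^sub>0 'k)" where
  "sc c g = Poly_Mapping.map (\<lambda>x. c * x) g"

lemma lookup_sc [simp]: "Poly_Mapping.lookup (sc c g) y = c * Poly_Mapping.lookup g y"
  by (simp add: sc_def map.rep_eq when_def)

lemma lext_sc: "lext R f = (\<Sum>m\<in>Poly_Mapping.keys f. sc (Poly_Mapping.lookup f m) (R m))"
  by (simp add: lext_def sc_def)

lemma lookup_lext:
  assumes "finite M" "Poly_Mapping.keys f \<subseteq> M"
  shows "Poly_Mapping.lookup (lext R f) y = (\<Sum>m\<in>M. Poly_Mapping.lookup f m * Poly_Mapping.lookup (R m) y)"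
proof -
  have "Poly_Mapping.lookup (lext R f) y = (\<Sum>m\<in>Poly_Mapping.keys f. Poly_Mapping.lookup f m * Poly_Mapping.lookup (R m) y)"
    by (simp add: lext_sc lookup_sum)
  also have "\<dots> = (\<Sum>m\<in>M. Poly_Mapping.lookup f m * Poly_Mapping.lookup (R m) y)"
    using assms by (intro sum.mono_neutral_left) (auto simp: in_keys_iff)
  finally show ?thesis .
qed

lemma lookup_lext': "Poly_Mapping.lookup (lext R f) y = (\<Sum>m\<in>Poly_Mapping.keys f. Poly_Mapping.lookup f m * Poly_Mapping.lookup (R m) y)"
  by (rule lookup_lext) auto

lemma lext_add: "lext R (f + g) = lext R f + lext R g"
proof (rule poly_mapping_eqI)
  fix y
  let ?M = "Poly_Mapping.keys f \<union> Poly_Mapping.keys g"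
  have k: "Poly_Mapping.keys (f + g) \<subseteq> ?M" by (rule keys_add)
  show "Poly_Mapping.lookup (lext R (f + g)) y = Poly_Mapping.lookup (lext R f + lext R g) y"
    unfolding lookup_add
    by (subst (1 2 3) lookup_lext[where M="?M"]) (use k in \<open>auto simp: lookup_add algebra_simps sum.distrib\<close>)
qed

lemma lext_zero [simp]: "lext R 0 = 0"
  by (simp add: lext_def)

lemma lext_sum: "lext R (sum F A) = (\<Sum>a\<in>A. lext R (F a))"
  by (induction A rule: infinite_finite_induct) (auto simp: lext_add)

lemma lext_scale: "lext R (sc c f) = sc c (lext R f)"
proof (rule poly_mapping_eqI)
  fix y
  have k: "Poly_Mapping.keys (sc c f) \<subseteq> Poly_Mapping.keys f" by (auto simp: in_keys_iff)
  show "Poly_Mapping.lookup (lext R (sc c f)) y = Poly_Mapping.lookup (sc c (lext R f)) y"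
    using lookup_lext[OF _ k, of R y] by (simp add: lookup_lext' sum_distrib_left algebra_simps)
qed

lemma lext_single: "lext R (Poly_Mapping.single m c) = sc c (R m)"
  by (rule poly_mapping_eqI) (simp add: lookup_lext[where M="{m}"] lookup_single when_def)

lemma lext_basis [simp]: "lext R (basis m) = R m"
  by (rule poly_mapping_eqI) (simp add: basis_def lookup_lext[where M="{m}"] lookup_single when_def)

lemma lext_cong: "(\<And>m. m \<in> Poly_Mapping.keys f \<Longrightarrow> R m = R' m) \<Longrightarrow> lext R f = lext R' f"
  by (simp add: lext_def)

lemma lext_basis_id: "lext basis f = f"
proof (rule poly_mapping_eqI)
  fix k
  show "Poly_Mapping.lookup (lext basis f) k = Poly_Mapping.lookup f k"
    by (cases "k \<in> Poly_Mapping.keys f")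
      (simp_all add: lookup_lext' basis_def lookup_single when_def in_keys_iff if_distrib sum.delta cong: if_cong)
qed

lemma keys_lext: "Poly_Mapping.keys (lext R f) \<subseteq> (\<Union>m\<in>Poly_Mapping.keys f. Poly_Mapping.keys (R m))"
proof
  fix y assume "y \<in> Poly_Mapping.keys (lext R f)"
  then have "(\<Sum>m\<in>Poly_Mapping.keys f. Poly_Mapping.lookup f m * Poly_Mapping.lookup (R m) y) \<noteq> 0"
    by (simp add: in_keys_iff lookup_lext')
  then obtain m where "m \<in> Poly_Mapping.keys f" "Poly_Mapping.lookup (R m) y \<noteq> 0"
    by (metis (no_types, lifting) mult_zero_right sum.neutral)
  then show "y \<in> (\<Union>m\<in>Poly_Mapping.keys f. Poly_Mapping.keys (R m))" by (auto simp: in_keys_iff)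
qed

lemma lext_lext: "lext Q (lext R f) = lext (\<lambda>m. lext Q (R m)) f"
proof (rule poly_mapping_eqI)
  fix y
  let ?N = "\<Union>m\<in>Poly_Mapping.keys f. Poly_Mapping.keys (R m)"
  have fN: "finite ?N" by auto
  have "Poly_Mapping.lookup (lext Q (lext R f)) y
      = (\<Sum>n\<in>?N. Poly_Mapping.lookup (lext R f) n * Poly_Mapping.lookup (Q n) y)"
    by (rule lookup_lext[OF fN keys_lext])
  also have "\<dots> = (\<Sum>n\<in>?N. \<Sum>m\<in>Poly_Mapping.keys f. Poly_Mapping.lookup f m * Poly_Mapping.lookup (R m) n * Poly_Mapping.lookup (Q n) y)"
    by (simp add: lookup_lext' sum_distrib_right)
  also have "\<dots> = (\<Sum>m\<in>Poly_Mapping.keys f. \<Sum>n\<in>?N. Poly_Mapping.lookup f m * Poly_Mapping.lookup (R m) n * Poly_Mapping.lookup (Q n) y)"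
    by (rule sum.swap)
  also have "\<dots> = (\<Sum>m\<in>Poly_Mapping.keys f. Poly_Mapping.lookup f m * Poly_Mapping.lookup (lext Q (R m)) y)"
  proof (rule sum.cong[OF refl])
    fix m assume m: "m \<in> Poly_Mapping.keys f"
    have "Poly_Mapping.lookup (lext Q (R m)) y = (\<Sum>n\<in>?N. Poly_Mapping.lookup (R m) n * Poly_Mapping.lookup (Q n) y)"
      by (rule lookup_lext) (use m in auto)
    then show "(\<Sum>n\<in>?N. Poly_Mapping.lookup f m * Poly_Mapping.lookup (R m) n * Poly_Mapping.lookup (Q n) y)
        = Poly_Mapping.lookup f m * Poly_Mapping.lookup (lext Q (R m)) y"
      by (simp add: sum_distrib_left mult.assoc)
  qed
  also have "\<dots> = Poly_Mapping.lookup (lext (\<lambda>m. lext Q (R m)) f) y"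
    by (simp add: lookup_lext')
  finally show "Poly_Mapping.lookup (lext Q (lext R f)) y = Poly_Mapping.lookup (lext (\<lambda>m. lext Q (R m)) f) y" .
qed


lemma sc_single: "sc c (Poly_Mapping.single a d) = Poly_Mapping.single a (c * d)"
  by (rule poly_mapping_eqI) (simp add: lookup_single when_def)

lemma sc_sum: "sc c (sum F A) = (\<Sum>a\<in>A. sc c (F a))"
  by (rule poly_mapping_eqI) (simp add: lookup_sum sum_distrib_left)

lemma sc_add: "sc c (f + g) = sc c f + sc c g"
  by (rule poly_mapping_eqI) (simp add: lookup_add algebra_simps)

lemma sc_zero [simp]: "sc c 0 = 0" "sc 0 f = 0"
  by (rule poly_mapping_eqI, simp)+

lemma sc_one [simp]: "sc 1 f = f"
  by (rule poly_mapping_eqI, simp)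

lemma sc_sc: "sc c (sc d f) = sc (c * d) f"
  by (rule poly_mapping_eqI) (simp add: algebra_simps)

definition ext :: "'a \<Rightarrow> ('a \<times> 'b \<Rightarrow>\<^sub>0 'k::field) \<Rightarrow> ('b \<Rightarrow>\<^sub>0 'k)" where
  "ext T g = (\<Sum>p\<in>{p\<in>Poly_Mapping.keys g. fst p = T}.
               Poly_Mapping.single (snd p) (Poly_Mapping.lookup g p))"

lemma dT_ext: "dT T f = ext T (Delta_a f)"
  by (simp add: dT_def ext_def)

lemma lookup_ext [simp]: "Poly_Mapping.lookup (ext T g) r = Poly_Mapping.lookup g (T, r)"
proof -
  let ?S = "{p\<in>Poly_Mapping.keys g. fst p = T}"
  have "Poly_Mapping.lookup (ext T g) r = (\<Sum>p\<in>?S. if (T, r) = p then Poly_Mapping.lookup g p else 0)"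
    unfolding ext_def lookup_sum
    by (rule sum.cong[OF refl]) (auto simp: lookup_single when_def)
  also have "\<dots> = Poly_Mapping.lookup g (T, r)"
    by (simp add: in_keys_iff)
  finally show ?thesis .
qed

lemma keys_ext: "Poly_Mapping.keys (ext T g) = {r. (T, r) \<in> Poly_Mapping.keys g}"
  by (auto simp: in_keys_iff)

lemma ext_add: "ext T (f + g) = ext T f + ext T g"
  by (rule poly_mapping_eqI) (simp add: lookup_add)

lemma ext_sum: "ext T (sum F A) = (\<Sum>a\<in>A. ext T (F a))"
  by (rule poly_mapping_eqI) (simp add: lookup_sum)

lemma ext_sc: "ext T (sc c f) = sc c (ext T f)"
  by (rule poly_mapping_eqI) simp

lemma ext_zero [simp]: "ext T 0 = 0"
  by (rule poly_mapping_eqI) simp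

lemma ext_single: "ext T (Poly_Mapping.single (a, b) c) = (if a = T then Poly_Mapping.single b c else 0)"
  by (rule poly_mapping_eqI) (simp add: lookup_single when_def)

lemma ext_lext: "ext T (lext R g) = lext (\<lambda>m. ext T (R m)) g"
  by (rule poly_mapping_eqI) (simp add: lookup_lext')

lemma sum_set_Cons: "sum F (set_Cons A B) = (\<Sum>a\<in>A. \<Sum>xs\<in>B. F (a # xs))"
proof -
  have e: "set_Cons A B = (\<lambda>(a, xs). a # xs) ` (A \<times> B)"
    by (auto simp: set_Cons_def)
  have i: "inj_on (\<lambda>(a, xs). a # xs) (A \<times> B)"
    by (auto simp: inj_on_def)
  show ?thesis
    unfolding e sum.reindex[OF i] sum.cartesian_product by (simp add: case_prod_beta)
qed

lemma mext_Nil: "mext op [] = Poly_Mapping.single (op []) 1"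
  by (simp add: mext_def)

lemma mext_Cons: "mext op (f # fs) = lext (\<lambda>m. mext (\<lambda>ms. op (m # ms)) fs) f"
proof -
  have "mext op (f # fs) = (\<Sum>m\<in>Poly_Mapping.keys f. \<Sum>ms\<in>listset (map Poly_Mapping.keys fs).
      Poly_Mapping.single (op (m # ms)) (Poly_Mapping.lookup f m * prod_list (map2 Poly_Mapping.lookup fs ms)))"
    by (simp add: mext_def sum_set_Cons)
  also have "\<dots> = lext (\<lambda>m. mext (\<lambda>ms. op (m # ms)) fs) f"
    by (simp add: lext_sc mext_def sc_sum sc_single)
  finally show ?thesis .
qed

lemma mext_basis_list: "mext op (map basis ms) = basis (op ms)"
  by (induction ms arbitrary: op) (simp_all add: mext_Nil mext_Cons basis_def[symmetric])

lemma listset_iff: "xs \<in> listset As \<longleftrightarrow> list_all2 (\<in>) xs As"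
  by (induction As arbitrary: xs) (auto simp: set_Cons_def list_all2_Cons2)

lemma finite_listset: "(\<And>A. A \<in> set As \<Longrightarrow> finite A) \<Longrightarrow> finite (listset As)"
proof (induction As)
  case Nil then show ?case by simp
next
  case (Cons A As)
  have e: "set_Cons A (listset As) = (\<lambda>(a, xs). a # xs) ` (A \<times> listset As)"
    by (auto simp: set_Cons_def)
  show ?case using Cons by (simp add: e)
qed

lemma mext_zero_arg: "0 \<in> set fs \<Longrightarrow> mext op fs = 0"
proof (induction fs arbitrary: op)
  case Nil then show ?case by simp
next
  case (Cons f fs)
  show ?case
  proof (cases "f = 0")
    case True then show ?thesis by (simp add: mext_Cons lext_def)
  next
    case False
    then have "0 \<in> set fs" using Cons by simp
    then show ?thesis by (simp add: mext_Cons Cons.IH lext_sc)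
  qed
qed


lemma mext_unit_mid:
  "mext op (fs @ Poly_Mapping.single a 1 # gs)
     = mext (\<lambda>ms. op (take (length fs) ms @ a # drop (length fs) ms)) (fs @ gs)"
proof (induction fs arbitrary: op)
  case Nil
  show ?case by (simp add: mext_Cons lext_single)
next
  case (Cons f fs)
  show ?case by (simp add: mext_Cons Cons.IH)
qed

lemma lext_fun_sum: "lext (\<lambda>p. \<Sum>a\<in>A. F a p) g = (\<Sum>a\<in>A. lext (F a) g)"
  by (rule poly_mapping_eqI) (simp add: lookup_lext' lookup_sum sum_distrib_left sum.swap[of _ A])

lemma lext_fun_sc: "lext (\<lambda>p. sc c (F p)) g = sc c (lext F g)"
  by (rule poly_mapping_eqI) (simp add: lookup_lext' sum_distrib_left algebra_simps)

lemma mext_lext: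
  "mext op (map (lext h) fs) = (\<Sum>ms\<in>listset (map Poly_Mapping.keys fs).
      sc (prod_list (map2 Poly_Mapping.lookup fs ms)) (mext op (map h ms)))"
proof (induction fs arbitrary: op)
  case Nil
  show ?case by simp
next
  case (Cons f fs)
  let ?L = "listset (map Poly_Mapping.keys fs)"
  let ?c = "\<lambda>ms. prod_list (map2 Poly_Mapping.lookup fs ms)"
  have "mext op (map (lext h) (f # fs))
      = lext (\<lambda>m. lext (\<lambda>p. mext (\<lambda>ps. op (p # ps)) (map (lext h) fs)) (h m)) f"
    by (simp add: mext_Cons lext_lext)
  also have "\<dots> = lext (\<lambda>m. \<Sum>ms\<in>?L. sc (?c ms) (mext op (map h (m # ms)))) f"
    by (simp add: Cons.IH lext_fun_sum lext_fun_sc mext_Cons)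
  also have "\<dots> = (\<Sum>m\<in>Poly_Mapping.keys f. \<Sum>ms\<in>?L.
       sc (Poly_Mapping.lookup f m * ?c ms) (mext op (map h (m # ms))))"
    by (simp add: lext_sc sc_sum sc_sc)
  also have "\<dots> = (\<Sum>ms\<in>listset (map Poly_Mapping.keys (f # fs)).
      sc (prod_list (map2 Poly_Mapping.lookup (f # fs) ms)) (mext op (map h ms)))"
    by (simp add: sum_set_Cons)
  finally show ?case .
qed

lemma vee_pair_unit: "vee_pair (xs @ (None, None) # ys) = vee_pair (xs @ ys)"
  by (simp add: vee_pair_def vee_m_def)

lemma vee2_filter:
  "vee2 (map delta_m ms) = (vee2 (map delta_m (filter (\<lambda>T. T \<noteq> None) ms)) :: ('x mono \<times> 'x mono \<Rightarrow>\<^sub>0 'k::field))"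
proof (induction "length ms" arbitrary: ms rule: less_induct)
  case less
  show ?case
  proof (cases "None \<in> set ms")
    case True
    then obtain xs ys where ms: "ms = xs @ None # ys" by (meson split_list)
    have op: "\<And>n. (\<lambda>qs. vee_pair (take n qs @ (None, None) # drop n qs)) = vee_pair"
      by (rule ext) (simp add: vee_pair_unit)
    have "vee2 (map delta_m ms) = (mext (\<lambda>qs. vee_pair (take (length xs) qs @ (None, None) # drop (length xs) qs))
            (map delta_m xs @ map delta_m ys) :: ('x mono \<times> 'x mono \<Rightarrow>\<^sub>0 'k::field))"
      using mext_unit_mid[where fs="map delta_m xs" and gs="map delta_m ys" and op=vee_pair and a="(None,None)"]
      by (simp add: ms vee2_def delta_m_def basis_def)
    also have "\<dots> = vee2 (map delta_m (xs @ ys))"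
      by (simp only: op vee2_def map_append)
    also have "\<dots> = vee2 (map delta_m (filter (\<lambda>T. T \<noteq> None) (xs @ ys)))"
      by (rule less) (simp add: ms)
    finally show ?thesis by (simp add: ms)
  next
    case False
    then have "filter (\<lambda>T. T \<noteq> None) ms = ms" by (metis (mono_tags, lifting) filter_id_conv)
    then show ?thesis by simp
  qed
qed

lemma vee2_single: "vee2 [g] = g"
proof -
  have "vee2 [g] = lext (\<lambda>m. Poly_Mapping.single (vee_pair [m]) 1) g"
    by (simp add: vee2_def mext_Cons mext_Nil)
  also have "(\<lambda>m. Poly_Mapping.single (vee_pair [m]) 1) = basis"
    by (rule ext) (auto simp: vee_pair_def vee_m_def basis_def split: option.splits)
  finally show ?thesis by (simp add: lext_basis_id)
qed

lemma delta_hom_basis: "delta_m (vee_m ms) = vee2 (map delta_m ms)"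
proof -
  define us where "us = map the (filter (\<lambda>T. T \<noteq> None) ms)"
  have f: "filter (\<lambda>T. T \<noteq> None) ms = map Some us"
    unfolding us_def by (induction ms) auto
  have v: "vee_m ms = (case us of [] \<Rightarrow> None | [u] \<Rightarrow> Some u | _ \<Rightarrow> Some (Nd us))"
    unfolding vee_m_def us_def by (simp only: Let_def)
  have "vee2 (map delta_m ms) = vee2 (map delta_tr us)"
    by (subst vee2_filter, simp only: f) (simp add: delta_m_def o_def)
  moreover have "delta_m (vee_m ms) = vee2 (map delta_tr us)"
  proof (cases us rule: remdups_adj.cases)
    case 1 then show ?thesis
      by (simp only: v, simp add: delta_m_def vee2_def mext_Nil basis_def) (simp add: vee_pair_def vee_m_def)
  next
    case (2 u) then show ?thesis by (simp add: v delta_m_def vee2_single)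
  next
    case (3 u1 u2 rest) then show ?thesis by (simp add: v delta_m_def)
  qed
  ultimately show ?thesis by metis
qed

lemma Delta_vee: "Delta_a (vee fs) = vee2 (map Delta_a fs)"
proof -
  have "Delta_a (vee fs) = (\<Sum>ms\<in>listset (map Poly_Mapping.keys fs).
      sc (prod_list (map2 Poly_Mapping.lookup fs ms)) (delta_m (vee_m ms)))"
    by (simp add: Delta_a_def vee_def mext_def lext_sum lext_single)
  also have "\<dots> = vee2 (map Delta_a fs)"
    unfolding vee2_def Delta_a_def mext_lext by (simp add: delta_hom_basis vee2_def)
  finally show ?thesis .
qed


lemma keys_Sigma_ext:
  "Poly_Mapping.keys g = Sigma (fst ` Poly_Mapping.keys g) (\<lambda>t. Poly_Mapping.keys (ext t g))"
  by (auto simp: keys_ext image_iff) force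

lemma ext_mext:
  "ext T (mext (\<lambda>ps. (A (map fst ps), B (map snd ps))) gs)
     = (\<Sum>Ts\<in>listset (map (\<lambda>g. fst ` Poly_Mapping.keys g) gs).
          if A Ts = T then mext B (map2 ext Ts gs) else 0)"
proof (induction gs arbitrary: A B)
  case Nil
  show ?case by (simp add: mext_Nil ext_single)
next
  case (Cons g gs)
  let ?L = "listset (map (\<lambda>g. fst ` Poly_Mapping.keys g) gs)"
  define F where "F t r Ts' = (if A (t # Ts') = T
      then sc (Poly_Mapping.lookup g (t, r)) (mext (\<lambda>rs. B (r # rs)) (map2 ext Ts' gs)) else 0)" for t r Ts'
  have fL: "finite ?L" by (rule finite_listset) auto
  have "ext T (mext (\<lambda>ps. (A (map fst ps), B (map snd ps))) (g # gs))
      = lext (\<lambda>p. ext T (mext (\<lambda>ps. (A (fst p # map fst ps), B (snd p # map snd ps))) gs)) g"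
    by (simp add: mext_Cons ext_lext)
  also have "\<dots> = lext (\<lambda>p. \<Sum>Ts'\<in>?L. if A (fst p # Ts') = T
        then mext (\<lambda>rs. B (snd p # rs)) (map2 ext Ts' gs) else 0) g"
  proof (rule lext_cong)
    fix p
    show "ext T (mext (\<lambda>ps. (A (fst p # map fst ps), B (snd p # map snd ps))) gs) =
         (\<Sum>Ts'\<in>?L. if A (fst p # Ts') = T then mext (\<lambda>rs. B (snd p # rs)) (map2 ext Ts' gs) else 0)"
      using Cons.IH[of "\<lambda>xs. A (fst p # xs)" "\<lambda>xs. B (snd p # xs)"] by simp
  qed
  also have "\<dots> = (\<Sum>p\<in>Poly_Mapping.keys g. \<Sum>Ts'\<in>?L. F (fst p) (snd p) Ts')"
    by (simp add: lext_sc sc_sum F_def if_distrib[of "sc _"] cong: if_cong)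
  also have "\<dots> = (\<Sum>p\<in>Sigma (fst ` Poly_Mapping.keys g) (\<lambda>t. Poly_Mapping.keys (ext t g)).
                     \<Sum>Ts'\<in>?L. F (fst p) (snd p) Ts')"
    using keys_Sigma_ext[of g] by simp
  also have "\<dots> = (\<Sum>t\<in>fst ` Poly_Mapping.keys g. \<Sum>r\<in>Poly_Mapping.keys (ext t g). \<Sum>Ts'\<in>?L. F t r Ts')"
    by (subst sum.Sigma) (auto simp: case_prod_beta)
  also have "\<dots> = (\<Sum>t\<in>fst ` Poly_Mapping.keys g. \<Sum>Ts'\<in>?L. \<Sum>r\<in>Poly_Mapping.keys (ext t g). F t r Ts')"
    by (simp add: sum.swap[of _ "Poly_Mapping.keys (ext _ g)"])
  also have "\<dots> = (\<Sum>t\<in>fst ` Poly_Mapping.keys g. \<Sum>Ts'\<in>?L.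
        if A (t # Ts') = T then mext B (ext t g # map2 ext Ts' gs) else 0)"
  proof -
    have m: "mext B (ext t g # map2 ext Ts' gs) = (\<Sum>r\<in>Poly_Mapping.keys (ext t g).
        sc (Poly_Mapping.lookup g (t, r)) (mext (\<lambda>rs. B (r # rs)) (map2 ext Ts' gs)))" for t Ts'
      by (simp add: mext_Cons lext_sc)
    show ?thesis
      by (rule sum.cong[OF refl], rule sum.cong[OF refl]) (simp add: m F_def)
  qed
  also have "\<dots> = (\<Sum>Ts\<in>listset (map (\<lambda>g. fst ` Poly_Mapping.keys g) (g # gs)).
          if A Ts = T then mext B (map2 ext Ts (g # gs)) else 0)"
  proof -
    have e: "map2 ext (a # xs) (g # gs) = ext a g # map2 ext xs gs" for a xs
      by simp
    show ?thesis unfolding list.map listset.simps sum_set_Cons e ..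
  qed
  finally show ?case .
qed

lemma map2_ext_Delta: "length Ts = length fs \<Longrightarrow> map2 ext Ts (map Delta_a fs) = map2 dT Ts fs"
  by (induction Ts fs rule: list_induct2) (simp_all add: dT_ext)

lemma dT_vee_raw:
  "dT T (vee fs) = (\<Sum>Ts\<in>listset (map (\<lambda>f. fst ` Poly_Mapping.keys (Delta_a f)) fs).
          if vee_m Ts = T then vee (map2 dT Ts fs) else 0)"
proof -
  have "dT T (vee fs) = ext T (mext (\<lambda>ps. (vee_m (map fst ps), vee_m (map snd ps))) (map Delta_a fs))"
  proof -
    have vp: "vee_pair = (\<lambda>ps. (vee_m (map fst ps), vee_m (map snd ps)))"
      by (rule ext) (simp add: vee_pair_def)
    show ?thesis by (simp only: dT_ext Delta_vee vee2_def vp)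
  qed
  also have "\<dots> = (\<Sum>Ts\<in>listset (map (\<lambda>f. fst ` Poly_Mapping.keys (Delta_a f)) fs).
          if vee_m Ts = T then vee (map2 dT Ts fs) else 0)"
    unfolding ext_mext map_map o_def
    by (rule sum.cong[OF refl]) (simp add: vee_def map2_ext_Delta listset_iff list_all2_lengthD)
  finally show ?thesis .
qed


lemma vee_m_mono: "set Ts \<subseteq> monomials \<Longrightarrow> vee_m Ts \<in> monomials"
proof -
  assume a: "set Ts \<subseteq> monomials"
  define us where "us = map the (filter (\<lambda>T. T \<noteq> None) Ts)"
  have r: "\<forall>u\<in>set us. reduced u"
    using a unfolding us_def monomials_def by auto
  have v: "vee_m Ts = (case us of [] \<Rightarrow> None | [u] \<Rightarrow> Some u | _ \<Rightarrow> Some (Nd us))"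
    unfolding vee_m_def us_def by (simp only: Let_def)
  show ?thesis
  proof (cases us rule: remdups_adj.cases)
    case 1 then show ?thesis by (simp add: v monomials_def)
  next
    case (2 u) then show ?thesis using r by (simp add: v monomials_def)
  next
    case (3 u1 u2 rest) then show ?thesis using r by (simp add: v monomials_def)
  qed
qed

lemma keys_mext: "Poly_Mapping.keys (mext op fs) \<subseteq> op ` listset (map Poly_Mapping.keys fs)"
proof -
  have "Poly_Mapping.keys (mext op fs) \<subseteq> (\<Union>ms\<in>listset (map Poly_Mapping.keys fs).
      Poly_Mapping.keys (Poly_Mapping.single (op ms) (prod_list (map2 Poly_Mapping.lookup fs ms))))"
    unfolding mext_def by (rule keys_sum)
  also have "\<dots> \<subseteq> op ` listset (map Poly_Mapping.keys fs)"
    by auto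
  finally show ?thesis .
qed

lemma listset_set_subset:
  assumes "ps \<in> listset (map g xs)" "\<And>x. x \<in> set xs \<Longrightarrow> g x \<subseteq> S"
  shows "set ps \<subseteq> S"
proof
  fix p assume "p \<in> set ps"
  then obtain i where i: "i < length ps" "ps ! i = p" by (meson in_set_conv_nth)
  have la: "list_all2 (\<in>) ps (map g xs)" using assms(1) by (simp add: listset_iff)
  then have "length ps = length xs" by (simp add: list_all2_lengthD)
  with la i have "p \<in> g (xs ! i)" "xs ! i \<in> set xs"
    by (auto simp: list_all2_conv_all_nth)
  then show "p \<in> S" using assms(2) by blast
qed

lemma keys_delta_tr: "reduced t \<Longrightarrow> Poly_Mapping.keys (delta_tr t :: ('x mono \<times> 'x mono \<Rightarrow>\<^sub>0 'k::field)) \<subseteq> monomials \<times> monomials"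
proof (induction t)
  case (Lf x)
  then show ?case
    using keys_add[of "basis (Some (Lf x), None) :: ('x mono \<times> 'x mono \<Rightarrow>\<^sub>0 'k)" "basis (None, Some (Lf x))"]
    by (auto simp: basis_def monomials_def)
next
  case (Nd ts)
  have "Poly_Mapping.keys (delta_tr (Nd ts) :: ('x mono \<times> 'x mono \<Rightarrow>\<^sub>0 'k::field))
     \<subseteq> vee_pair ` listset (map Poly_Mapping.keys (map delta_tr ts :: ('x mono \<times> 'x mono \<Rightarrow>\<^sub>0 'k::field) list))"
    unfolding delta_tr.simps vee2_def by (rule keys_mext)
  also have "\<dots> \<subseteq> monomials \<times> monomials"
  proof
    fix q assume "q \<in> vee_pair ` listset (map Poly_Mapping.keys (map delta_tr ts :: ('x mono \<times> 'x mono \<Rightarrow>\<^sub>0 'k::field) list))"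
    then obtain ps where ps: "ps \<in> listset (map (\<lambda>t. Poly_Mapping.keys (delta_tr t :: ('x mono \<times> 'x mono \<Rightarrow>\<^sub>0 'k::field))) ts)"
      and q: "q = vee_pair ps" by (auto simp: o_def)
    have "set ps \<subseteq> monomials \<times> monomials"
      by (rule listset_set_subset[OF ps]) (use Nd in auto)
    then have "set (map fst ps) \<subseteq> monomials" "set (map snd ps) \<subseteq> monomials" by auto
    then show "q \<in> monomials \<times> monomials"
      by (simp add: q vee_pair_def vee_m_mono)
  qed
  finally show ?case .
qed

lemma keys_delta_m: "m \<in> monomials \<Longrightarrow> Poly_Mapping.keys (delta_m m :: ('x mono \<times> 'x mono \<Rightarrow>\<^sub>0 'k::field)) \<subseteq> monomials \<times> monomials"
  using keys_delta_tr by (auto simp: delta_m_def basis_def monomials_def split: option.splits)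

lemma keys_Delta: "f \<in> Kinf \<Longrightarrow> Poly_Mapping.keys (Delta_a f) \<subseteq> monomials \<times> monomials"
  unfolding Delta_a_def Kinf_def using keys_lext[of delta_m f] keys_delta_m by fastforce

lemma dT_Kinf: "f \<in> Kinf \<Longrightarrow> dT T f \<in> Kinf"
  using keys_Delta[of f] by (auto simp: Kinf_def dT_ext keys_ext)

lemma vee_Kinf: "set fs \<subseteq> Kinf \<Longrightarrow> vee fs \<in> Kinf"
proof -
  assume a: "set fs \<subseteq> Kinf"
  have "Poly_Mapping.keys (vee fs) \<subseteq> vee_m ` listset (map Poly_Mapping.keys fs)"
    by (simp add: vee_def keys_mext)
  also have "\<dots> \<subseteq> monomials"
  proof
    fix m assume "m \<in> vee_m ` listset (map Poly_Mapping.keys fs)"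
    then obtain ms where ms: "ms \<in> listset (map Poly_Mapping.keys fs)" "m = vee_m ms" by auto
    have "set ms \<subseteq> monomials"
      by (rule listset_set_subset[OF ms(1)]) (use a in \<open>auto simp: Kinf_def\<close>)
    then show "m \<in> monomials" by (simp add: ms vee_m_mono)
  qed
  finally show ?thesis by (simp add: Kinf_def)
qed

lemma basis_Kinf: "m \<in> monomials \<Longrightarrow> basis m \<in> Kinf"
  by (simp add: basis_def Kinf_def)

definition TSet :: "'x mono \<Rightarrow> nat \<Rightarrow> 'x mono list set" where
  "TSet T p = {Ts. length Ts = p \<and> set Ts \<subseteq> monomials \<and> vee_m Ts = T}"

lemma vee_m_elem:
  assumes "vee_m Ts = T" "x \<in> set Ts"
  shows "x \<in> {None, T} \<union> (case T of Some (Nd us) \<Rightarrow> Some ` set us | _ \<Rightarrow> {})"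
proof (cases x)
  case None then show ?thesis by simp
next
  case (Some y)
  define us where "us = map the (filter (\<lambda>T. T \<noteq> None) Ts)"
  have y: "y \<in> set us" using assms(2) Some unfolding us_def by force
  have v: "vee_m Ts = (case us of [] \<Rightarrow> None | [u] \<Rightarrow> Some u | _ \<Rightarrow> Some (Nd us))"
    unfolding vee_m_def us_def by (simp only: Let_def)
  show ?thesis
  proof (cases us rule: remdups_adj.cases)
    case 1 then show ?thesis using y by simp
  next
    case (2 u) then show ?thesis using y assms(1) v Some by simp
  next
    case (3 u1 u2 rest) then show ?thesis using y assms(1) v Some by auto
  qed
qed

lemma finite_TSet: "finite (TSet T p)"
proof -
  let ?V = "{None, T} \<union> (case T of Some (Nd us) \<Rightarrow> Some ` set us | _ \<Rightarrow> {})"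
  have fV: "finite ?V" by (auto split: option.splits tr.splits)
  have "TSet T p \<subseteq> {Ts. set Ts \<subseteq> ?V \<and> length Ts = p}"
    unfolding TSet_def using vee_m_elem by blast
  moreover have "finite {Ts. set Ts \<subseteq> ?V \<and> length Ts = p}"
    using finite_lists_length_eq[OF fV] by simp
  ultimately show ?thesis by (rule finite_subset)
qed

lemma dT_zero_notin: "T \<notin> fst ` Poly_Mapping.keys (Delta_a f) \<Longrightarrow> dT T f = 0"
  by (rule poly_mapping_eqI) (force simp: dT_ext in_keys_iff image_iff)

lemma dT_vee:
  assumes "set fs \<subseteq> Kinf"
  shows "dT T (vee fs) = (\<Sum>Ts\<in>TSet T (length fs). vee (map2 dT Ts fs))"
proof -
  let ?A = "map (\<lambda>f. fst ` Poly_Mapping.keys (Delta_a f)) fs"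
  let ?S = "{Ts\<in>listset ?A. vee_m Ts = T}"
  have "dT T (vee fs) = (\<Sum>Ts\<in>?S. vee (map2 dT Ts fs))"
  proof -
    have "finite (listset ?A)" by (rule finite_listset) auto
    then show ?thesis unfolding dT_vee_raw by (simp add: sum.inter_filter)
  qed
  also have "\<dots> = (\<Sum>Ts\<in>TSet T (length fs). vee (map2 dT Ts fs))"
  proof (rule sum.mono_neutral_left[OF finite_TSet])
    show "?S \<subseteq> TSet T (length fs)"
    proof
      fix Ts assume Ts: "Ts \<in> ?S"
      have "set Ts \<subseteq> monomials"
        by (rule listset_set_subset[of _ "\<lambda>f. fst ` Poly_Mapping.keys (Delta_a f)" fs])
           (use Ts keys_Delta assms in force)+
      moreover have "length Ts = length fs"
        using Ts by (auto simp: listset_iff dest: list_all2_lengthD)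
      ultimately show "Ts \<in> TSet T (length fs)" using Ts by (simp add: TSet_def)
    qed
    show "\<forall>Ts\<in>TSet T (length fs) - ?S. vee (map2 dT Ts fs) = 0"
    proof
      fix Ts assume Ts: "Ts \<in> TSet T (length fs) - ?S"
      then have l: "length Ts = length fs" and nl: "\<not> list_all2 (\<in>) Ts ?A"
        by (auto simp: TSet_def listset_iff)
      then obtain i where i: "i < length fs" "Ts ! i \<notin> fst ` Poly_Mapping.keys (Delta_a (fs ! i))"
        by (auto simp: list_all2_conv_all_nth)
      then have "map2 dT Ts fs ! i = 0" using l by (simp add: dT_zero_notin)
      then have "0 \<in> set (map2 dT Ts fs)" using i l by (metis length_map length_zip min.idem nth_mem)
      then show "vee (map2 dT Ts fs) = 0" by (simp add: vee_def mext_zero_arg)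
    qed
  qed
  finally show ?thesis .
qed


lemma dT_lext: "dT T (lext R f) = lext (\<lambda>m. dT T (R m)) f"
  by (simp add: dT_ext Delta_a_def lext_lext ext_lext)

lemma dT_lin: "dT T f = lext (\<lambda>m. dT T (basis m)) f"
  using dT_lext[of T basis f] by (simp add: lext_basis_id)

lemma dT_sum: "dT T (sum F A) = (\<Sum>a\<in>A. dT T (F a))"
  by (simp add: dT_ext Delta_a_def lext_sum ext_sum)

lemma dT_zero [simp]: "dT T 0 = 0"
  by (simp add: dT_ext Delta_a_def)

lemma vee_basis_list: "vee (map basis ms) = basis (vee_m ms)"
  by (simp add: vee_def mext_basis_list)

lemma basis_Nd: "2 \<le> length ts \<Longrightarrow> basis (Some (Nd ts)) = vee (map (\<lambda>t. basis (Some t)) ts)"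
proof -
  assume l: "2 \<le> length ts"
  have v: "vee_m (map Some ts) = Some (Nd ts)"
  proof (cases ts rule: remdups_adj.cases)
    case (3 a b rest) then show ?thesis by (simp add: vee_m_def o_def)
  qed (use l in auto)
  have "vee (map (\<lambda>t. basis (Some t)) ts) = vee (map basis (map Some ts))"
    by (simp only: map_map o_def)
  also have "\<dots> = basis (vee_m (map Some ts))" by (rule vee_basis_list)
  finally have "vee (map (\<lambda>t. basis (Some t)) ts) = basis (Some (Nd ts))" by (simp only: v)
  then show ?thesis by (rule sym)
qed

lemma dT_basis: "dT T (basis m) = ext T (delta_m m)"
  by (simp add: dT_ext Delta_a_def)

lemma dT_basis_None: "dT T (basis None) = (if T = None then basis None else 0)"
  unfolding dT_basis by (simp add: delta_m_def basis_def ext_single)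

lemma dT_leaf: "dT T (basis (Some (Lf x))) =
   (if T = None then basis (Some (Lf x)) else if T = Some (Lf x) then basis None else 0)"
  unfolding dT_basis by (simp add: delta_m_def basis_def ext_single ext_add)

lemma vee_m_None_iff: "vee_m Ts = None \<longleftrightarrow> (\<forall>x\<in>set Ts. x = None)"
proof -
  have "vee_m Ts = None \<longleftrightarrow> filter (\<lambda>T. T \<noteq> None) Ts = []"
    by (cases "map the (filter (\<lambda>T. T \<noteq> None) Ts)" rule: remdups_adj.cases)
       (auto simp: vee_m_def Let_def)
  also have "\<dots> \<longleftrightarrow> (\<forall>x\<in>set Ts. x = None)"
    by (simp add: filter_empty_conv)
  finally show ?thesis .
qed

lemma None_mono [simp]: "None \<in> monomials"
  by (simp add: monomials_def)

lemma TSet_None: "TSet None n = {replicate n None}"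
proof -
  have "Ts \<in> TSet None n \<longleftrightarrow> Ts = replicate n None" for Ts
    by (auto simp: TSet_def vee_m_None_iff replicate_length_same[symmetric] intro: replicate_eqI)
  then show ?thesis by auto
qed

lemma map2_replicate: "length bs = n \<Longrightarrow> map2 f (replicate n x) bs = map (f x) bs"
  by (induction bs arbitrary: n) auto

lemma dT_None_basis: "m \<in> monomials \<Longrightarrow> dT None (basis m :: ('x mono \<Rightarrow>\<^sub>0 'k::field)) = basis m"
proof -
  have "reduced t \<Longrightarrow> dT None (basis (Some t) :: ('x mono \<Rightarrow>\<^sub>0 'k::field)) = basis (Some t)" for t :: "'x tr"
  proof (induction t)
    case (Lf x) then show ?case by (simp add: dT_leaf)
  next
    case (Nd ts)
    let ?bs = "map (\<lambda>t. basis (Some t)) ts :: ('x mono \<Rightarrow>\<^sub>0 'k) list"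
    have l: "2 \<le> length ts" and r: "\<And>t. t \<in> set ts \<Longrightarrow> reduced t" using Nd.prems by auto
    have K: "set ?bs \<subseteq> Kinf" using r by (auto simp: basis_Kinf monomials_def)
    have "dT None (basis (Some (Nd ts))) = dT None (vee ?bs)" by (simp add: basis_Nd[OF l])
    also have "\<dots> = vee (map (dT None) ?bs)"
      by (simp add: dT_vee[OF K] TSet_None map2_replicate)
    also have "map (dT None) ?bs = ?bs"
      using Nd.IH r by simp
    finally show ?case by (simp add: basis_Nd[OF l])
  qed
  then show "m \<in> monomials \<Longrightarrow> dT None (basis m :: ('x mono \<Rightarrow>\<^sub>0 'k::field)) = basis m"
    by (auto simp: monomials_def dT_basis_None)
qed

lemma dT_None: "f \<in> Kinf \<Longrightarrow> dT None f = f"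
proof -
  assume f: "f \<in> Kinf"
  have "dT None f = lext basis f"
    by (subst dT_lin, rule lext_cong) (use f dT_None_basis in \<open>auto simp: Kinf_def\<close>)
  then show ?thesis by (simp add: lext_basis_id)
qed


lemma filt_map_Some: "filter (\<lambda>T. T \<noteq> None) Ts = map Some (map the (filter (\<lambda>T. T \<noteq> None) Ts))"
  by (induction Ts) auto

lemma vee_m_leaf_iff: "vee_m Ts = Some (Lf k) \<longleftrightarrow> filter (\<lambda>T. T \<noteq> None) Ts = [Some (Lf k)]"
proof -
  define us where "us = map the (filter (\<lambda>T. T \<noteq> None) Ts)"
  have f: "filter (\<lambda>T. T \<noteq> None) Ts = map Some us"
    unfolding us_def by (rule filt_map_Some)
  have v: "vee_m Ts = (case us of [] \<Rightarrow> None | [u] \<Rightarrow> Some u | _ \<Rightarrow> Some (Nd us))"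
    unfolding vee_m_def us_def by (simp only: Let_def)
  show ?thesis
    unfolding f v by (cases us rule: remdups_adj.cases) auto
qed

lemma rep_upd: "i < n \<Longrightarrow> (replicate n x)[i := a] = replicate i x @ a # replicate (n - Suc i) x"
proof -
  assume "i < n"
  then have n: "n = i + Suc (n - Suc i)" by simp
  show ?thesis by (subst n, simp only: replicate_add) (simp add: list_update_append)
qed

lemma filter_single_conv:
  assumes a: "a \<noteq> None"
  shows "filter (\<lambda>T. T \<noteq> None) Ts = [a] \<longleftrightarrow> (\<exists>i<length Ts. Ts = (replicate (length Ts) None)[i := a])"
proof
  assume "filter (\<lambda>T. T \<noteq> None) Ts = [a]"
  then obtain us vs where Ts: "Ts = us @ a # vs" and us: "\<forall>u\<in>set us. u = None"
      and vs: "filter (\<lambda>T. T \<noteq> None) vs = []"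
    by (auto simp: filter_eq_Cons_iff)
  have vs': "\<forall>v\<in>set vs. v = None" using vs by (simp add: filter_empty_conv)
  have "us = replicate (length us) None" using us by (simp add: replicate_length_same)
  moreover have "vs = replicate (length vs) None" using vs' by (simp add: replicate_length_same)
  ultimately have e: "Ts = (replicate (length Ts) None)[length us := a]"
    using Ts rep_upd[of "length us" "length Ts" None a] by simp
  have lt: "length us < length Ts" using Ts by simp
  show "\<exists>i<length Ts. Ts = (replicate (length Ts) None)[i := a]"
    using e lt by blast
next
  assume "\<exists>i<length Ts. Ts = (replicate (length Ts) None)[i := a]"
  then obtain i where i: "i < length Ts" and Ts: "Ts = (replicate (length Ts) None)[i := a]" by blast
  have T2: "Ts = replicate i None @ a # replicate (length Ts - Suc i) None"
    by (rule trans[OF Ts rep_upd[OF i]])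
  show "filter (\<lambda>T. T \<noteq> None) Ts = [a]"
  proof -
    have "filter (\<lambda>T. T \<noteq> None) (replicate i None @ a # replicate m None) = [a]" for m
      using a by (simp add: filter_empty_conv)
    then show ?thesis using T2 by metis
  qed
qed

lemma Lf_mono [simp]: "Some (Lf k) \<in> monomials"
  by (simp add: monomials_def)

lemma TSet_leaf: "TSet (Some (Lf k)) n = (\<lambda>i. (replicate n None)[i := Some (Lf k)]) ` {..<n}"
proof -
  have "Ts \<in> TSet (Some (Lf k)) n \<longleftrightarrow> Ts \<in> (\<lambda>i. (replicate n None)[i := Some (Lf k)]) ` {..<n}" for Ts
  proof
    assume "Ts \<in> TSet (Some (Lf k)) n"
    then have n: "length Ts = n" and v: "vee_m Ts = Some (Lf k)" by (auto simp: TSet_def)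
    from v have "filter (\<lambda>T. T \<noteq> None) Ts = [Some (Lf k)]" by (simp only: vee_m_leaf_iff)
    then obtain i where "i < length Ts" "Ts = (replicate (length Ts) None)[i := Some (Lf k)]"
      using filter_single_conv[of "Some (Lf k)" Ts] by auto
    then show "Ts \<in> (\<lambda>i. (replicate n None)[i := Some (Lf k)]) ` {..<n}"
      using n by auto
  next
    assume "Ts \<in> (\<lambda>i. (replicate n None)[i := Some (Lf k)]) ` {..<n}"
    then obtain i where i: "i < n" and Ts: "Ts = (replicate n None)[i := Some (Lf k)]" by auto
    have "set Ts \<subseteq> insert (Some (Lf k)) (set (replicate n None))"
      unfolding Ts by (rule set_update_subset_insert)
    then have "set Ts \<subseteq> monomials" by auto
    moreover have "vee_m Ts = Some (Lf k)"
      unfolding vee_m_leaf_iff by (subst filter_single_conv) (use i Ts in auto)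
    ultimately show "Ts \<in> TSet (Some (Lf k)) n" using Ts by (simp add: TSet_def)
  qed
  then show ?thesis by blast
qed

lemma map2_update: "length xs = length ys \<Longrightarrow> i < length ys \<Longrightarrow>
    map2 f (xs[i := x]) ys = (map2 f xs ys)[i := f x (ys ! i)]"
  by (rule nth_equalityI) (auto simp: nth_list_update)

lemma inj_rep_upd: "a \<noteq> x \<Longrightarrow> inj_on (\<lambda>i. (replicate n x)[i := a]) {..<n}"
proof (rule inj_onI)
  fix i j assume a: "a \<noteq> x" and i: "i \<in> {..<n}" and j: "j \<in> {..<n}"
    and e: "(replicate n x)[i := a] = (replicate n x)[j := a]"
  have "(replicate n x)[i := a] ! i = a" using i by simp
  moreover have "(replicate n x)[j := a] ! i = (if j = i then a else x)" using i j by (auto simp: nth_list_update)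
  ultimately have "(if j = i then a else x) = a" using e by simp
  then show "i = j" using a by (auto split: if_splits)
qed

lemma der_basis_mono: "m \<in> monomials \<Longrightarrow> dT (Some (Lf k)) (basis m :: ('x mono \<Rightarrow>\<^sub>0 'k::field)) = der_m k m"
proof -
  have "reduced t \<Longrightarrow> dT (Some (Lf k)) (basis (Some t) :: ('x mono \<Rightarrow>\<^sub>0 'k::field)) = der_tr k t" for t :: "'x tr"
  proof (induction t)
    case (Lf x) then show ?case by (auto simp: dT_leaf)
  next
    case (Nd ts)
    let ?bs = "map (\<lambda>t. basis (Some t)) ts :: ('x mono \<Rightarrow>\<^sub>0 'k) list"
    let ?L = "Some (Lf k) :: 'x mono"
    let ?n = "length ts"
    have l: "2 \<le> length ts" and r: "\<And>t. t \<in> set ts \<Longrightarrow> reduced t" using Nd.prems by auto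
    have K: "set ?bs \<subseteq> Kinf" using r by (auto simp: basis_Kinf monomials_def)
    have N: "map (dT None) ?bs = ?bs" "map (dT None \<circ> (\<lambda>t. basis (Some t))) ts = ?bs"
      using r by (simp_all add: dT_None_basis monomials_def)
    have "dT ?L (basis (Some (Nd ts))) = dT ?L (vee ?bs)" by (simp add: basis_Nd[OF l])
    also have "\<dots> = (\<Sum>Ts\<in>TSet ?L ?n. vee (map2 dT Ts ?bs))"
      by (simp add: dT_vee[OF K])
    also have "\<dots> = (\<Sum>i<?n. vee (map2 dT ((replicate ?n None)[i := ?L]) ?bs))"
      unfolding TSet_leaf by (subst sum.reindex) (auto intro: inj_rep_upd)
    also have "\<dots> = (\<Sum>i<?n. vee (?bs[i := der_tr k (ts ! i)]))"
    proof (rule sum.cong[OF refl])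
      fix i assume i: "i \<in> {..<?n}"
      have "map2 dT ((replicate ?n None)[i := ?L]) ?bs = (map (dT None) ?bs)[i := dT ?L (?bs ! i)]"
        using i by (simp add: map2_update map2_replicate)
      also have "\<dots> = ?bs[i := der_tr k (ts ! i)]"
        using i Nd.IH[of "ts ! i"] r[of "ts ! i"] by (simp add: N)
      finally show "vee (map2 dT ((replicate ?n None)[i := ?L]) ?bs) = vee (?bs[i := der_tr k (ts ! i)])"
        by simp
    qed
    also have "\<dots> = der_tr k (Nd ts)" by simp
    finally show ?case .
  qed
  then show "m \<in> monomials \<Longrightarrow> dT (Some (Lf k)) (basis m :: ('x mono \<Rightarrow>\<^sub>0 'k::field)) = der_m k m"
    by (auto simp: monomials_def dT_basis_None der_m_def)
qed

lemma part2: "f \<in> Kinf \<Longrightarrow> dT (Some (Lf k)) f = der k f"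
  unfolding der_def
  by (subst dT_lin, rule lext_cong) (auto simp: Kinf_def der_basis_mono)


lemma map2_dT_Kinf: "set bs \<subseteq> Kinf \<Longrightarrow> set (map2 dT Ts bs) \<subseteq> Kinf"
  by (auto simp: set_zip intro!: dT_Kinf)

lemma dT_dT_vee:
  assumes K: "set bs \<subseteq> Kinf"
  shows "dT S (dT T (vee bs)) = (\<Sum>Ts\<in>TSet T (length bs). \<Sum>Ss\<in>TSet S (length bs).
            vee (map2 dT Ss (map2 dT Ts bs)))"
proof -
  have "dT S (dT T (vee bs)) = (\<Sum>Ts\<in>TSet T (length bs). dT S (vee (map2 dT Ts bs)))"
    by (simp add: dT_vee[OF K] dT_sum)
  also have "\<dots> = (\<Sum>Ts\<in>TSet T (length bs). \<Sum>Ss\<in>TSet S (length bs).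
            vee (map2 dT Ss (map2 dT Ts bs)))"
  proof (rule sum.cong[OF refl])
    fix Ts assume "Ts \<in> TSet T (length bs)"
    then have l: "length (map2 dT Ts bs) = length bs" by (simp add: TSet_def)
    show "dT S (vee (map2 dT Ts bs)) = (\<Sum>Ss\<in>TSet S (length bs). vee (map2 dT Ss (map2 dT Ts bs)))"
      using dT_vee[OF map2_dT_Kinf[OF K, of Ts], of S] by (simp only: l)
  qed
  finally show ?thesis .
qed

lemma comm_basis: "m \<in> monomials \<Longrightarrow> dT S (dT T (basis m :: ('x mono \<Rightarrow>\<^sub>0 'k::field))) = dT T (dT S (basis m))"
proof -
  have "reduced t \<Longrightarrow> \<forall>S T. dT S (dT T (basis (Some t) :: ('x mono \<Rightarrow>\<^sub>0 'k::field))) = dT T (dT S (basis (Some t)))" for t :: "'x tr"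
  proof (induction t)
    case (Lf x) then show ?case by (auto simp: dT_leaf dT_basis_None)
  next
    case (Nd ts)
    let ?bs = "map (\<lambda>t. basis (Some t)) ts :: ('x mono \<Rightarrow>\<^sub>0 'k) list"
    let ?n = "length ts"
    have l: "2 \<le> length ts" and r: "\<And>t. t \<in> set ts \<Longrightarrow> reduced t" using Nd.prems by auto
    have K: "set ?bs \<subseteq> Kinf" using r by (auto simp: basis_Kinf monomials_def)
    show ?case
    proof (intro allI)
      fix S T :: "'x mono"
      have e: "map2 dT Ss (map2 dT Ts ?bs) = map2 dT Ts (map2 dT Ss ?bs)"
        if "Ts \<in> TSet T ?n" "Ss \<in> TSet S ?n" for Ts Ss
      proof (rule nth_equalityI)
        show "length (map2 dT Ss (map2 dT Ts ?bs)) = length (map2 dT Ts (map2 dT Ss ?bs))"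
          using that by (simp add: TSet_def)
        fix i assume "i < length (map2 dT Ss (map2 dT Ts ?bs))"
        then have i: "i < ?n" "i < length Ts" "i < length Ss" using that by (auto simp: TSet_def)
        have "ts ! i \<in> set ts" using i by simp
        then show "map2 dT Ss (map2 dT Ts ?bs) ! i = map2 dT Ts (map2 dT Ss ?bs) ! i"
          using i Nd.IH r by simp
      qed
      have "dT S (dT T (basis (Some (Nd ts)))) = dT S (dT T (vee ?bs))" by (simp add: basis_Nd[OF l])
      also have "\<dots> = (\<Sum>Ts\<in>TSet T ?n. \<Sum>Ss\<in>TSet S ?n. vee (map2 dT Ss (map2 dT Ts ?bs)))"
        using dT_dT_vee[OF K, of S T] by simp
      also have "\<dots> = (\<Sum>Ss\<in>TSet S ?n. \<Sum>Ts\<in>TSet T ?n. vee (map2 dT Ts (map2 dT Ss ?bs)))"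
        by (subst sum.swap) (simp add: e)
      also have "\<dots> = dT T (dT S (vee ?bs))"
        using dT_dT_vee[OF K, of T S] by simp
      also have "\<dots> = dT T (dT S (basis (Some (Nd ts))))" by (simp add: basis_Nd[OF l])
      finally show "dT S (dT T (basis (Some (Nd ts)) :: ('x mono \<Rightarrow>\<^sub>0 'k))) = dT T (dT S (basis (Some (Nd ts))))" .
    qed
  qed
  then show "m \<in> monomials \<Longrightarrow> dT S (dT T (basis m :: ('x mono \<Rightarrow>\<^sub>0 'k::field))) = dT T (dT S (basis m))"
    by (auto simp: monomials_def dT_basis_None)
qed

lemma part1: "f \<in> Kinf \<Longrightarrow> dT S (dT T f) = dT T (dT S f)"
proof -
  assume f: "f \<in> Kinf"
  have "dT S (dT T f) = lext (\<lambda>m. dT S (dT T (basis m))) f"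
    by (subst dT_lin) (simp add: dT_lext)
  also have "\<dots> = lext (\<lambda>m. dT T (dT S (basis m))) f"
    by (rule lext_cong) (use f comm_basis in \<open>auto simp: Kinf_def\<close>)
  also have "\<dots> = dT T (dT S f)"
    by (subst (2) dT_lin) (simp add: dT_lext)
  finally show ?thesis .
qed

lemma vee_m_two: "vee_m [a, b] = (case a of None \<Rightarrow> b | Some a' \<Rightarrow> (case b of None \<Rightarrow> a | Some b' \<Rightarrow> Some (Nd [a', b'])))"
  by (simp add: vee_m_def split: option.split)

lemma TSet_two:
  assumes "T1 \<noteq> None" "T2 \<noteq> None" "T1 \<in> monomials" "T2 \<in> monomials"
  shows "TSet (vee_m [T1, T2]) 2 = {[None, vee_m [T1, T2]], [T1, T2], [vee_m [T1, T2], None]}"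
proof -
  obtain t1 t2 where T: "T1 = Some t1" "T2 = Some t2" using assms by auto
  have r: "reduced t1" "reduced t2" using assms T by (auto simp: monomials_def)
  have m: "Some t1 \<in> monomials" "Some t2 \<in> monomials" "Some (Nd [t1, t2]) \<in> monomials"
    using r by (auto simp: monomials_def)
  have "Ts \<in> TSet (Some (Nd [t1, t2])) 2 \<longleftrightarrow> Ts \<in> {[None, Some (Nd [t1, t2])], [Some t1, Some t2], [Some (Nd [t1, t2]), None]}"
    for Ts
  proof
    assume "Ts \<in> TSet (Some (Nd [t1, t2])) 2"
    then obtain a b where Ts: "Ts = [a, b]" and v: "vee_m [a, b] = Some (Nd [t1, t2])"
      by (auto simp: TSet_def length_Suc_conv numeral_2_eq_2)
    then show "Ts \<in> {[None, Some (Nd [t1, t2])], [Some t1, Some t2], [Some (Nd [t1, t2]), None]}"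
      by (auto simp: vee_m_two split: option.splits)
  next
    assume "Ts \<in> {[None, Some (Nd [t1, t2])], [Some t1, Some t2], [Some (Nd [t1, t2]), None]}"
    then show "Ts \<in> TSet (Some (Nd [t1, t2])) 2"
      using m by (auto simp: TSet_def vee_m_two)
  qed
  then show ?thesis using T by (auto simp: vee_m_two)
qed

lemma part4:
  assumes "T1 \<noteq> None" "T2 \<noteq> None" "T1 \<in> monomials" "T2 \<in> monomials" "f1 \<in> Kinf" "f2 \<in> Kinf"
  shows "dT (vee_m [T1, T2]) (mult f1 f2) =
          mult f1 (dT (vee_m [T1, T2]) f2) + mult (dT T1 f1) (dT T2 f2)
          + mult (dT (vee_m [T1, T2]) f1) f2"
proof -
  let ?T = "vee_m [T1, T2]"
  have ne: "?T \<noteq> None" using assms(1,2) by (simp add: vee_m_two split: option.splits)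
  have d: "[None, ?T] \<noteq> [T1, T2]" "[None, ?T] \<noteq> [?T, None]" "[T1, T2] \<noteq> [?T, None]"
    using assms(1,2) ne by auto
  have K: "set [f1, f2] \<subseteq> Kinf" using assms by simp
  have "dT ?T (mult f1 f2) = (\<Sum>Ts\<in>TSet ?T 2. vee (map2 dT Ts [f1, f2]))"
    using dT_vee[OF K, of ?T] by (simp add: mult_def numeral_2_eq_2)
  also have "\<dots> = vee (map2 dT [None, ?T] [f1, f2]) + (vee (map2 dT [T1, T2] [f1, f2]) + vee (map2 dT [?T, None] [f1, f2]))"
    unfolding TSet_two[OF assms(1-4)] using d by simp
  also have "\<dots> = mult f1 (dT ?T f2) + mult (dT T1 f1) (dT T2 f2) + mult (dT ?T f1) f2"
    using assms(5,6) by (simp add: mult_def dT_None add.assoc)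
  finally show ?thesis .
qed

lemma KX_Kinf: "KX \<subseteq> Kinf"
proof -
  have "binary t \<Longrightarrow> reduced t" for t :: "'x tr"
    by (induction t) auto
  then show ?thesis by (auto simp: KX_def Kinf_def bin_monomials_def monomials_def)
qed

theorem proposition4p3p7:
  shows
  "(\<forall>S\<in>(monomials :: ('x::countable) mono set). \<forall>T\<in>monomials.
       \<forall>f\<in>(Kinf :: ('x mono \<Rightarrow>\<^sub>0 'k::field_char_0) set).
       dT S (dT T f) = dT T (dT S f))
   \<and> (\<forall>k::'x. \<forall>f\<in>(Kinf :: ('x mono \<Rightarrow>\<^sub>0 'k) set). dT (Some (Lf k)) f = der k f)
   \<and> (\<forall>T\<in>(monomials :: 'x mono set). \<forall>p\<ge>1. \<forall>fs :: ('x mono \<Rightarrow>\<^sub>0 'k) list.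
        length fs = p \<and> set fs \<subseteq> Kinf \<longrightarrow>
        dT T (vee fs) =
          (\<Sum>Ts\<in>{Ts. length Ts = p \<and> set Ts \<subseteq> monomials \<and> vee_m Ts = T}.
              vee (map2 dT Ts fs)))
   \<and> (\<forall>T1\<in>(monomials :: 'x mono set). \<forall>T2\<in>monomials. \<forall>f1\<in>(KX :: ('x mono \<Rightarrow>\<^sub>0 'k) set). \<forall>f2\<in>KX.
        T1 \<noteq> None \<and> T2 \<noteq> None \<longrightarrow>
        dT (vee_m [T1, T2]) (mult f1 f2) =
          mult f1 (dT (vee_m [T1, T2]) f2) + mult (dT T1 f1) (dT T2 f2)
          + mult (dT (vee_m [T1, T2]) f1) f2)"
proof (intro conjI)
  show "\<forall>S\<in>(monomials :: 'x mono set). \<forall>T\<in>monomials.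
       \<forall>f\<in>(Kinf :: ('x mono \<Rightarrow>\<^sub>0 'k::field_char_0) set).
       dT S (dT T f) = dT T (dT S f)"
    using part1 by blast
  show "\<forall>k::'x. \<forall>f\<in>(Kinf :: ('x mono \<Rightarrow>\<^sub>0 'k) set). dT (Some (Lf k)) f = der k f"
    by (intro allI ballI part2)
  show "\<forall>T\<in>(monomials :: 'x mono set). \<forall>p\<ge>1. \<forall>fs :: ('x mono \<Rightarrow>\<^sub>0 'k) list.
        length fs = p \<and> set fs \<subseteq> Kinf \<longrightarrow>
        dT T (vee fs) =
          (\<Sum>Ts\<in>{Ts. length Ts = p \<and> set Ts \<subseteq> monomials \<and> vee_m Ts = T}.
              vee (map2 dT Ts fs))"
    using dT_vee unfolding TSet_def by blast
  show "\<forall>T1\<in>(monomials :: 'x mono set). \<forall>T2\<in>monomials. \<forall>f1\<in>(KX :: ('x mono \<Rightarrow>\<^sub>0 'k) set). \<forall>f2\<in>KX.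
        T1 \<noteq> None \<and> T2 \<noteq> None \<longrightarrow>
        dT (vee_m [T1, T2]) (mult f1 f2) =
          mult f1 (dT (vee_m [T1, T2]) f2) + mult (dT T1 f1) (dT T2 f2)
          + mult (dT (vee_m [T1, T2]) f1) f2"
    using part4 KX_Kinf by blast
qed

end
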